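(* Let $1\le p<\infty$ and $f\in BV_p[0,1]$. For every $\varepsilon>0$ there exists $\delta>0$ such that whenever $0\le x_1<x_2<\dots<x_m\le1$ and $|f(x_j)|<\delta$ for all $j\in\{1,\dots,m\}$, one has $\left(\sum_{j=1}^{m-1}|f(x_{j+1})-f(x_j)|^p\right)^{1/p}<\varepsilon$.
   Context: For $1\le p<\infty$, $BV_p[0,1]$ is the set of functions $f:[0,1]\to\mathbb F$ ($\mathbb F\in\{\mathbb R,\mathbb C\}$) with finite total Wiener $p$-variation $\operatorname{Var}_p(f,[0,1]):=\sup\sum_{j=1}^m|f(t_j)-f(t_{j-1})|^p$, the supremum over all partitions $0=t_0<t_1<\dots<t_m=1$. *)

theory Defs
  imports "HOL-Analysis.Analysis"
begin

definition is_partition01 :: "(nat \<Rightarrow> real) \<Rightarrow> nat \<Rightarrow> bool" where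
  "is_partition01 t m \<longleftrightarrow> m \<ge> 1 \<and> t 0 = 0 \<and> t m = 1 \<and> (\<forall>j<m. t j < t (Suc j))"

definition pvar_sum :: "real \<Rightarrow> (real \<Rightarrow> 'a::real_normed_vector) \<Rightarrow> (nat \<Rightarrow> real) \<Rightarrow> nat \<Rightarrow> real" where
  "pvar_sum p f t m = (\<Sum>j=1..m. norm (f (t j) - f (t (j - 1))) powr p)"

definition Var_p :: "real \<Rightarrow> (real \<Rightarrow> 'a::real_normed_vector) \<Rightarrow> ereal" where
  "Var_p p f = (SUP (t, m) \<in> {(t, m). is_partition01 t m}. ereal (pvar_sum p f t m))"

definition BV_p :: "real \<Rightarrow> (real \<Rightarrow> 'a::real_normed_vector) set" where
  "BV_p p = {f. Var_p p f < \<infinity>}"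

definition small_values_small_pvar :: "real \<Rightarrow> (real \<Rightarrow> 'a::real_normed_vector) \<Rightarrow> bool" where
  "small_values_small_pvar p f \<longleftrightarrow>
     (\<forall>\<epsilon>>0. \<exists>\<delta>>0. \<forall>(x :: nat \<Rightarrow> real) (m :: nat).
        (\<forall>j\<in>{1..m}. 0 \<le> x j \<and> x j \<le> 1) \<and> (\<forall>j. 1 \<le> j \<and> j < m \<longrightarrow> x j < x (Suc j)) \<and>
        (\<forall>j\<in>{1..m}. norm (f (x j)) < \<delta>)
        \<longrightarrow> (\<Sum>j=1..m-1. norm (f (x (Suc j)) - f (x j)) powr p) powr (1 / p) < \<epsilon>)"

end

theory Submission
  imports Defs
begin


lemma powr_sum_le:
  fixes x y p :: real
  assumes "x \<ge> 0" "y \<ge> 0" "p \<ge> 1"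
  shows "(x + y) powr p \<le> 2 powr (p - 1) * (x powr p + y powr p)"
proof (cases "x = 0 \<or> y = 0")
  case True
  have "1 \<le> 2 powr (p - 1)" using assms by (intro ge_one_powr_ge_zero) auto
  moreover have "z powr p \<le> 2 powr (p - 1) * z powr p" if "z \<ge> 0" for z :: real
    using calculation mult_right_mono[of 1 "2 powr (p-1)" "z powr p"] by simp
  ultimately show ?thesis using True assms by auto
next
  case False
  hence pos: "x > 0" "y > 0" using assms by auto
  have "((1 - 1/2) *\<^sub>R x + (1/2) *\<^sub>R y) powr p \<le> (1 - 1/2) * x powr p + (1/2) * y powr p"
    by (rule convex_onD[OF powr_convex[OF assms(3)]]) (use pos in auto)
  hence h: "((x + y) / 2) powr p \<le> (x powr p + y powr p) / 2" by (simp add: field_simps)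
  have "(x + y) powr p = (2 * ((x+y)/2)) powr p" by (rule arg_cong[where f="\<lambda>z. z powr p"]) simp
  also have "\<dots> = 2 powr p * ((x+y)/2) powr p" using pos by (subst powr_mult) auto
  also have "\<dots> \<le> 2 powr p * ((x powr p + y powr p) / 2)" using h by simp
  also have "\<dots> = 2 powr (p - 1) * (x powr p + y powr p)" by (simp add: powr_diff)
  finally show ?thesis .
qed

fun lcs :: "real \<Rightarrow> (real \<Rightarrow> 'a::real_normed_vector) \<Rightarrow> real list \<Rightarrow> real" where
  "lcs p f (x # y # xs) = norm (f y - f x) powr p + lcs p f (y # xs)"
| "lcs p f _ = 0"

lemma lcs_nonneg: "lcs p f xs \<ge> 0"
  by (induction p f xs rule: lcs.induct) auto

lemma lcs_Cons: "lcs p f (x # ys) = lcs p f ys + (if ys = [] then 0 else norm (f (hd ys) - f x) powr p)"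
  by (cases ys) auto

lemma lcs_append: "lcs p f (xs @ ys) = lcs p f xs + lcs p f ys +
   (if xs = [] \<or> ys = [] then 0 else norm (f (hd ys) - f (last xs)) powr p)"
proof (induction xs)
  case Nil then show ?case by simp
next
  case (Cons x xs)
  then show ?case by (cases xs; cases ys) (auto simp: lcs_Cons)
qed

lemma lcs_nth: "lcs p f xs = (\<Sum>i<length xs - 1. norm (f (xs ! Suc i) - f (xs ! i)) powr p)"
proof (induction p f xs rule: lcs.induct)
  case (1 p f x y xs)
  then show ?case by (simp add: sum.lessThan_Suc_shift del: sum.lessThan_Suc) 
qed auto

lemma split_lt:
  fixes xs :: "real list"
  assumes "sorted_wrt (<) xs"
  shows "xs = filter (\<lambda>x. x < c) xs @ filter (\<lambda>x. c \<le> x) xs"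
  using assms
proof (induction xs)
  case (Cons a xs)
  show ?case
  proof (cases "a < c")
    case True then show ?thesis using Cons by auto
  next
    case False
    hence "\<forall>x\<in>set xs. c \<le> x" using Cons.prems by auto
    hence "filter (\<lambda>x. x < c) xs = []" "filter (\<lambda>x. c \<le> x) xs = xs"
      by (auto simp: filter_empty_conv intro: filter_True)
    then show ?thesis using False by simp
  qed
qed simp

lemma split_at:
  fixes xs :: "real list"
  assumes "sorted_wrt (<) xs" "c \<in> set xs"
  shows "filter (\<lambda>x. c \<le> x) xs = c # filter (\<lambda>x. c < x) xs"
  using assms
proof (induction xs)
  case (Cons a xs)
  show ?case
  proof (cases "a = c")
    case True
    hence "\<forall>x\<in>set xs. c < x" using Cons.prems by auto
    hence "filter (\<lambda>x. c \<le> x) xs = xs" "filter (\<lambda>x. c < x) xs = xs"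
      by (auto simp: filter_id_conv)
    then show ?thesis using True by simp
  next
    case False
    then show ?thesis using Cons by auto
  qed
qed simp


lemma sorted_uniq:
  fixes xs ys :: "real list"
  assumes "sorted_wrt (<) xs" "sorted_wrt (<) ys" "set xs = set ys"
  shows "xs = ys"
  using assms sorted_distinct_set_unique strict_sorted_iff by blast

lemma term_le:
  fixes f :: "real \<Rightarrow> 'a::real_normed_vector"
  assumes "p \<ge> 1" "norm (f x) < \<delta>" "norm (f y) < \<delta>"
  shows "norm (f y - f x) powr p \<le> (2 * \<delta>) powr p"
proof -
  have "norm (f y - f x) \<le> norm (f y) + norm (f x)" by (rule norm_triangle_ineq4)
  also have "\<dots> \<le> 2 * \<delta>" using assms by simp
  finally show ?thesis using assms by (intro powr_mono2) auto
qed

lemma lcs_cons_le: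
  fixes f :: "real \<Rightarrow> 'a::real_normed_vector"
  assumes "p \<ge> 1" "\<forall>z\<in>set (x # ys). norm (f z) < \<delta>"
  shows "lcs p f (x # ys) \<le> lcs p f ys + (2 * \<delta>) powr p"
proof (cases ys)
  case Nil then show ?thesis by simp
next
  case (Cons y zs)
  then show ?thesis using term_le[OF assms(1), of f x \<delta> y] assms by simp
qed

lemma lcs_cons_ge: "lcs p f (x # ys) \<ge> lcs p f ys"
  by (cases ys) auto

lemma lcs_append_le:
  fixes f :: "real \<Rightarrow> 'a::real_normed_vector"
  assumes "p \<ge> 1" "\<forall>z\<in>set (xs @ ys). norm (f z) < \<delta>"
  shows "lcs p f (xs @ ys) \<le> lcs p f xs + lcs p f ys + (2 * \<delta>) powr p"
proof -
  have "(if xs = [] \<or> ys = [] then 0 else norm (f (hd ys) - f (last xs)) powr p) \<le> (2 * \<delta>) powr p"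
  proof (cases "xs = [] \<or> ys = []")
    case False
    then show ?thesis using assms by (auto intro!: term_le)
  qed auto
  then show ?thesis by (simp add: lcs_append)
qed

lemma lcs_append_ge: "lcs p f (xs @ ys) \<ge> lcs p f xs + lcs p f ys"
  by (simp add: lcs_append)

lemma end_bound:
  fixes f :: "real \<Rightarrow> 'a::real_normed_vector"
  assumes "p \<ge> 1"
  shows "norm (f a) powr p \<le> 2 powr (p - 1) * (norm (f b - f a) powr p + norm (f b) powr p)"
proof -
  have "norm (f a) \<le> norm (f b - f a) + norm (f b)"
    by (metis add.commute norm_minus_commute norm_triangle_ineq2 diff_le_eq)
  hence "norm (f a) powr p \<le> (norm (f b - f a) + norm (f b)) powr p"
    using assms by (intro powr_mono2) auto
  also have "\<dots> \<le> 2 powr (p - 1) * (norm (f b - f a) powr p + norm (f b) powr p)"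
    using assms by (intro powr_sum_le) auto
  finally show ?thesis .
qed

lemma bracket:
  fixes f :: "real \<Rightarrow> 'a::real_normed_vector"
  assumes p: "p \<ge> 1" and b: "norm (f b) < \<delta>" "norm (f b') < \<delta>"
  shows "norm (f a' - f a) powr p / (2 powr (p - 1))^2
     \<le> norm (f b - f a) powr p + norm (f a' - f b') powr p + 2 * (2 * \<delta>) powr p"
proof -
  define K where "K = 2 powr (p - 1)"
  have K1: "K \<ge> 1" unfolding K_def using p by (intro ge_one_powr_ge_zero) auto
  have "norm (f a' - f a) \<le> norm (f a) + norm (f a')"
    by (metis add.commute norm_triangle_ineq4)
  hence "norm (f a' - f a) powr p \<le> (norm (f a) + norm (f a')) powr p"
    using p by (intro powr_mono2) auto
  also have "\<dots> \<le> K * (norm (f a) powr p + norm (f a') powr p)"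
    unfolding K_def using p by (intro powr_sum_le) auto
  finally have 1: "norm (f a' - f a) powr p \<le> K * (norm (f a) powr p + norm (f a') powr p)" .
  have 2: "norm (f a) powr p \<le> K * (norm (f b - f a) powr p + norm (f b) powr p)"
    unfolding K_def by (rule end_bound[OF p])
  have 3: "norm (f a') powr p \<le> K * (norm (f a' - f b') powr p + norm (f b') powr p)"
    unfolding K_def using end_bound[OF p, of f a' b'] by (simp add: norm_minus_commute)
  have db: "norm (f b) powr p \<le> (2 * \<delta>) powr p" "norm (f b') powr p \<le> (2 * \<delta>) powr p"
  proof -
    have "norm (f b) \<le> 2 * \<delta>" "norm (f b') \<le> 2 * \<delta>"
      using b norm_ge_zero[of "f b"] norm_ge_zero[of "f b'"] by linarith+
    then show "norm (f b) powr p \<le> (2 * \<delta>) powr p" "norm (f b') powr p \<le> (2 * \<delta>) powr p"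
      using p by (auto intro!: powr_mono2)
  qed
  have "norm (f a' - f a) powr p \<le> K * (K * (norm (f b - f a) powr p + norm (f b) powr p)
          + K * (norm (f a' - f b') powr p + norm (f b') powr p))"
    using 1 2 3 K1 by (smt (verit) mult_left_mono)
  also have "\<dots> = K^2 * (norm (f b - f a) powr p + norm (f a' - f b') powr p + norm (f b) powr p + norm (f b') powr p)"
    by (simp add: power2_eq_square algebra_simps)
  also have "\<dots> \<le> K^2 * (norm (f b - f a) powr p + norm (f a' - f b') powr p + 2 * (2 * \<delta>) powr p)"
    using db K1 by (intro mult_left_mono) auto
  finally show ?thesis using K1 unfolding K_def[symmetric] by (simp add: field_simps)
qed


lemma merge_bound:
  fixes f :: "real \<Rightarrow> 'a::real_normed_vector"
  assumes p: "p \<ge> 1"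
  shows "sorted_wrt (<) A \<Longrightarrow> sorted_wrt (<) B \<Longrightarrow> sorted_wrt (<) M \<Longrightarrow>
    set M = set A \<union> set B \<Longrightarrow> \<forall>b\<in>set B. norm (f b) < \<delta> \<Longrightarrow>
    lcs p f M \<ge> lcs p f B + lcs p f A / (2 powr (p - 1))^2 - 6 * real (length A) * (2 * \<delta>) powr p"
proof (induction A arbitrary: B M rule: induct_list012)
  case 1
  then have "M = B" by (intro sorted_uniq) auto
  then show ?case by simp
next
  case (2 a)
  define B1 where "B1 = filter (\<lambda>x. x < a) B"
  define Br where "Br = filter (\<lambda>x. a < x) B"
  define Bge where "Bge = filter (\<lambda>x. a \<le> x) B"
  have sB: "sorted_wrt (<) B1" "sorted_wrt (<) Br" "sorted_wrt (<) Bge"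
    using "2.prems" by (auto simp: B1_def Br_def Bge_def sorted_wrt_filter)
  have vals: "\<forall>z\<in>set B1. norm (f z) < \<delta>" "\<forall>z\<in>set Br. norm (f z) < \<delta>" "\<forall>z\<in>set Bge. norm (f z) < \<delta>"
    using "2.prems" by (auto simp: B1_def Br_def Bge_def)
  have M: "M = B1 @ a # Br"
    using "2.prems" sB by (intro sorted_uniq) (auto simp: B1_def Br_def sorted_wrt_append)
  have B: "B = B1 @ Bge" unfolding B1_def Bge_def by (rule split_lt[OF "2.prems"(2)])
  have "lcs p f Bge \<le> lcs p f Br + (2 * \<delta>) powr p"
  proof (cases "a \<in> set B")
    case True
    have "Bge = a # Br" using sB True by (intro sorted_uniq) (auto simp: Bge_def Br_def)
    then show ?thesis using lcs_cons_le[OF p, of a Br f \<delta>] vals True "2.prems" by auto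
  next
    case False
    have "Bge = Br" using sB False by (intro sorted_uniq) (auto simp: Bge_def Br_def le_less)
    then show ?thesis by simp
  qed
  moreover have "lcs p f B \<le> lcs p f B1 + lcs p f Bge + (2 * \<delta>) powr p"
    unfolding B using vals by (intro lcs_append_le[OF p]) auto
  moreover have "lcs p f M \<ge> lcs p f B1 + lcs p f Br"
    unfolding M using lcs_append_ge[where xs=B1 and ys="a # Br" and p=p and f=f] lcs_cons_ge[where x=a and ys=Br and p=p and f=f] by linarith
  ultimately show ?case using powr_ge_zero[of "2*\<delta>" p] by (simp; linarith)
next
  case (3 a a' A'')
  define K where "K = 2 powr (p - 1)"
  define E where "E = (2 * \<delta>) powr p"
  have K1: "K \<ge> 1" unfolding K_def using p by (intro ge_one_powr_ge_zero) auto
  have aa: "a < a'" "\<forall>x\<in>set A''. a' < x" "\<forall>x\<in>set A''. a < x" using "3.prems"(1) by auto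
  define B1 where "B1 = filter (\<lambda>x. x < a) B"
  define Bm where "Bm = filter (\<lambda>x. a \<le> x \<and> x < a') B"
  define B2 where "B2 = filter (\<lambda>x. a < x \<and> x < a') B"
  define B3 where "B3 = filter (\<lambda>x. a' \<le> x) B"
  define M' where "M' = filter (\<lambda>x. a' \<le> x) M"
  define M'' where "M'' = filter (\<lambda>x. a' < x) M"
  have sB: "sorted_wrt (<) B1" "sorted_wrt (<) Bm" "sorted_wrt (<) B2" "sorted_wrt (<) B3"
     "sorted_wrt (<) M'" "sorted_wrt (<) M''"
    using "3.prems" by (auto simp: B1_def Bm_def B2_def B3_def M'_def M''_def sorted_wrt_filter)
  have vals: "\<forall>z\<in>set B1. norm (f z) < \<delta>" "\<forall>z\<in>set Bm. norm (f z) < \<delta>"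
     "\<forall>z\<in>set B2. norm (f z) < \<delta>" "\<forall>z\<in>set B3. norm (f z) < \<delta>"
    using "3.prems" by (auto simp: B1_def Bm_def B2_def B3_def)
  have M'eq: "M' = a' # M''"
    using "3.prems" sB aa by (intro sorted_uniq) (auto simp: M'_def M''_def)
  have M: "M = B1 @ a # B2 @ M'"
    using "3.prems" sB aa by (intro sorted_uniq) (auto simp: B1_def B2_def M'_def sorted_wrt_append)
  have IH: "lcs p f M' \<ge> lcs p f B3 + lcs p f (a' # A'') / K^2 - 6 * real (length (a' # A'')) * E"
    unfolding K_def E_def
    using "3.prems" sB aa by (intro "3.IH"(2)) (auto simp: B3_def M'_def)
  have B: "B = B1 @ Bm @ B3"
  proof -
    have "B = B1 @ filter (\<lambda>x. a \<le> x) B" unfolding B1_def by (rule split_lt[OF "3.prems"(2)])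
    moreover have "filter (\<lambda>x. a \<le> x) B = Bm @ B3"
      using "3.prems" sB aa by (intro sorted_uniq) (auto simp: Bm_def B3_def sorted_wrt_filter sorted_wrt_append)
    ultimately show ?thesis by simp
  qed
  have "lcs p f Bm \<le> lcs p f B2 + E"
  proof (cases "a \<in> set B")
    case True
    have "Bm = a # B2" using sB True aa by (intro sorted_uniq) (auto simp: Bm_def B2_def)
    then show ?thesis unfolding E_def using lcs_cons_le[OF p, of a B2 f \<delta>] vals True "3.prems" by auto
  next
    case False
    have "Bm = B2" using sB False by (intro sorted_uniq) (auto simp: Bm_def B2_def le_less)
    then show ?thesis using E_def by simp
  qed
  moreover have "lcs p f B \<le> lcs p f B1 + lcs p f Bm + lcs p f B3 + 2 * E"
  proof -
    have "lcs p f (Bm @ B3) \<le> lcs p f Bm + lcs p f B3 + E"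
      unfolding E_def using vals by (intro lcs_append_le[OF p]) auto
    moreover have "lcs p f (B1 @ (Bm @ B3)) \<le> lcs p f B1 + lcs p f (Bm @ B3) + E"
      unfolding E_def using vals by (intro lcs_append_le[OF p]) auto
    ultimately show ?thesis using B by simp
  qed
  moreover have brk: "lcs p f (a # B2 @ M') \<ge> lcs p f B2 + lcs p f M' + norm (f a' - f a) powr p / K^2 - 2 * E"
  proof (cases "B2 = []")
    case True
    have "lcs p f (a # M') = lcs p f M' + norm (f a' - f a) powr p" by (simp add: M'eq)
    moreover have "norm (f a' - f a) powr p / K^2 \<le> norm (f a' - f a) powr p"
    proof -
      have "1 \<le> K^2" using K1 by (simp add: one_le_power)
      then show ?thesis by (simp add: divide_le_eq mult_le_cancel_left1)
    qed
    moreover have "E \<ge> 0" by (simp add: E_def)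
    ultimately show ?thesis using True by simp
  next
    case False
    have hl: "hd B2 \<in> set B2" "last B2 \<in> set B2" using False by auto
    have "lcs p f (a # B2 @ M') = lcs p f (a # B2) + lcs p f M' + norm (f a' - f (last B2)) powr p"
      using False lcs_append[of p f "a # B2" M'] by (simp add: M'eq)
    moreover have "lcs p f (a # B2) = lcs p f B2 + norm (f (hd B2) - f a) powr p"
      using False by (simp add: lcs_Cons)
    moreover have "norm (f a' - f a) powr p / K^2 \<le> norm (f (hd B2) - f a) powr p + norm (f a' - f (last B2)) powr p + 2 * E"
      unfolding K_def E_def using vals hl by (intro bracket[OF p]) auto
    ultimately show ?thesis by simp
  qed
  moreover have "lcs p f M \<ge> lcs p f B1 + lcs p f (a # B2 @ M')"
    unfolding M using lcs_append_ge[where xs=B1 and ys="a # B2 @ M'" and p=p and f=f] by simp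
  moreover have "lcs p f (a # a' # A'') = norm (f a' - f a) powr p + lcs p f (a' # A'')" by simp
  ultimately show ?case using IH unfolding K_def[symmetric] E_def[symmetric]
    using powr_ge_zero[of "2*\<delta>" p] unfolding E_def[symmetric]
    by (simp add: add_divide_distrib algebra_simps; linarith)
qed


lemma lcs_le_var:
  fixes f :: "real \<Rightarrow> 'a::real_normed_vector"
  assumes p: "p \<ge> 1" and fin: "Var_p p f < \<infinity>"
    and L: "sorted_wrt (<) L" "set L \<subseteq> {0..1}"
  shows "lcs p f L \<le> real_of_ereal (Var_p p f)"
proof -
  define mid where "mid = filter (\<lambda>x. 0 < x \<and> x < 1) L"
  define Z where "Z = (if (0::real) \<in> set L then [0::real] else [])"
  define Oe where "Oe = (if (1::real) \<in> set L then [1::real] else [])"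
  define L' where "L' = 0 # mid @ [1]"
  have smid: "sorted_wrt (<) mid" using L by (simp add: mid_def sorted_wrt_filter)
  have LZ: "L = Z @ mid @ Oe"
  proof -
    have r: "\<forall>x\<in>set L. 0 \<le> x \<and> x \<le> 1" using L by auto
    show ?thesis
    proof (rule sorted_uniq[OF L(1)])
      show "sorted_wrt (<) (Z @ mid @ Oe)"
        using smid r by (auto simp: Z_def Oe_def mid_def sorted_wrt_append)
      have "x \<in> set L \<longleftrightarrow> x \<in> set (Z @ mid @ Oe)" for x
      proof -
        have "x \<in> set L \<Longrightarrow> x = 0 \<or> x = 1 \<or> (0 < x \<and> x < 1)" using r by force
        then show ?thesis by (auto simp: Z_def Oe_def mid_def)
      qed
      then show "set L = set (Z @ mid @ Oe)" by blast
    qed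
  qed
  have "Z = [0] \<or> Z = []" by (simp add: Z_def)
  then have "lcs p f L \<le> lcs p f (0 # mid @ Oe)"
    using lcs_cons_ge[where x=0 and ys="mid @ Oe" and p=p and f=f] by (subst LZ) auto
  also have "\<dots> \<le> lcs p f L'"
  proof (cases "(1::real) \<in> set L")
    case True then show ?thesis by (simp add: Oe_def L'_def)
  next
    case False
    then show ?thesis using lcs_append_ge[where xs="0 # mid" and ys="[1]" and p=p and f=f]
      by (simp add: Oe_def L'_def)
  qed
  finally have le1: "lcs p f L \<le> lcs p f L'" .
  have sL': "sorted_wrt (<) L'" using smid by (auto simp: L'_def mid_def sorted_wrt_append)
  define t where "t = (\<lambda>j. L' ! j)"
  define m where "m = length L' - 1"
  have lenL': "length L' = m + 1" "m \<ge> 1" by (auto simp: m_def L'_def)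
  have part: "is_partition01 t m"
    unfolding is_partition01_def
  proof (intro conjI allI impI)
    show "1 \<le> m" by fact
    show "t 0 = 0" by (simp add: t_def L'_def)
    have "L' ! (length L' - 1) = last L'" by (simp add: last_conv_nth L'_def)
    then show "t m = 1" by (simp add: t_def m_def L'_def)
    fix j assume "j < m"
    then show "t j < t (Suc j)" unfolding t_def using sL' lenL' by (intro sorted_wrt_nth_less[OF sL']) auto
  qed
  have "pvar_sum p f t m = (\<Sum>j<m. norm (f (t (Suc j)) - f (t j)) powr p)"
    unfolding pvar_sum_def by (simp add: sum.atLeast1_atMost_eq)
  also have "\<dots> = lcs p f L'" by (simp add: lcs_nth t_def m_def)
  finally have pv: "pvar_sum p f t m = lcs p f L'" .
  have "ereal (pvar_sum p f t m) \<le> Var_p p f"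
    unfolding Var_p_def using part by (intro SUP_upper2[of "(t, m)"]) auto
  hence "ereal (lcs p f L') \<le> Var_p p f" using pv by simp
  moreover then have "Var_p p f = ereal (real_of_ereal (Var_p p f))"
    using fin by (cases "Var_p p f") auto
  ultimately have "ereal (lcs p f L') \<le> ereal (real_of_ereal (Var_p p f))" by simp
  then show ?thesis using le1 by simp
qed


lemma chain_list:
  fixes f :: "real \<Rightarrow> 'a::real_normed_vector" and x :: "nat \<Rightarrow> real"
  assumes "\<forall>j. 1 \<le> j \<and> j < m \<longrightarrow> x j < x (Suc j)"
  shows "sorted_wrt (<) (map x [1..<Suc m])"
    "lcs p f (map x [1..<Suc m]) = (\<Sum>j=1..m-1. norm (f (x (Suc j)) - f (x j)) powr p)"
    "set (map x [1..<Suc m]) = x ` {1..m}"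
proof -
  show "sorted_wrt (<) (map x [1..<Suc m])"
  proof (subst sorted_wrt_iff_nth_Suc_transp)
    show "transp ((<) :: real \<Rightarrow> real \<Rightarrow> bool)" by (auto simp: transp_def)
    show "\<forall>i. Suc i < length (map x [1..<Suc m]) \<longrightarrow> map x [1..<Suc m] ! i < map x [1..<Suc m] ! Suc i"
    proof (intro allI impI)
      fix i assume "Suc i < length (map x [1..<Suc m])"
      hence i: "Suc i < m" by (simp del: upt_Suc)
      then show "map x [1..<Suc m] ! i < map x [1..<Suc m] ! Suc i"
        using assms[rule_format, of "Suc i"] by (simp del: upt_Suc)
    qed
  qed
  have "lcs p f (map x [1..<Suc m]) = (\<Sum>i<m-1. norm (f (x (Suc (Suc i))) - f (x (Suc i))) powr p)"
    by (simp add: lcs_nth del: upt_Suc)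
  also have "\<dots> = (\<Sum>j=1..m-1. norm (f (x (Suc j)) - f (x j)) powr p)"
    by (simp add: sum.atLeast1_atMost_eq)
  finally show "lcs p f (map x [1..<Suc m]) = (\<Sum>j=1..m-1. norm (f (x (Suc j)) - f (x j)) powr p)" .
  show "set (map x [1..<Suc m]) = x ` {1..m}" by auto
qed



lemma main_gen:
  fixes f :: "real \<Rightarrow> 'a::real_normed_vector"
  assumes p: "p \<ge> 1" and f: "f \<in> BV_p p"
  shows "small_values_small_pvar p f"
proof (rule ccontr)
  define V where "V = real_of_ereal (Var_p p f)"
  have fin: "Var_p p f < \<infinity>" using f by (simp add: BV_p_def)
  assume "\<not> small_values_small_pvar p f"
  then obtain \<epsilon> :: real where eps: "\<epsilon> > 0" and
    nex: "\<not> (\<exists>\<delta>>0. \<forall>(x :: nat \<Rightarrow> real) (m :: nat).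
        (\<forall>j\<in>{1..m}. 0 \<le> x j \<and> x j \<le> 1) \<and> (\<forall>j. 1 \<le> j \<and> j < m \<longrightarrow> x j < x (Suc j)) \<and>
        (\<forall>j\<in>{1..m}. norm (f (x j)) < \<delta>)
        \<longrightarrow> (\<Sum>j=1..m-1. norm (f (x (Suc j)) - f (x j)) powr p) powr (1 / p) < \<epsilon>)"
    unfolding small_values_small_pvar_def by blast
  define e where "e = \<epsilon> powr p"
  have epos: "e > 0" using eps by (simp add: e_def)
  have base: "\<exists>L. sorted_wrt (<) L \<and> set L \<subseteq> {0..1} \<and> (\<forall>z\<in>set L. norm (f z) < \<delta>) \<and> lcs p f L \<ge> e"
    if dpos: "\<delta> > 0" for \<delta>
  proof -
    obtain x m where x: "\<forall>j\<in>{1..m}. 0 \<le> x j \<and> x j \<le> 1" "\<forall>j. 1 \<le> j \<and> j < m \<longrightarrow> x j < x (Suc j)"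
        "\<forall>j\<in>{1..m}. norm (f (x j)) < \<delta>"
        "\<not> (\<Sum>j=1..m-1. norm (f (x (Suc j)) - f (x j)) powr p) powr (1 / p) < \<epsilon>"
    proof -
      have "\<not> (\<forall>(x :: nat \<Rightarrow> real) (m :: nat).
        (\<forall>j\<in>{1..m}. 0 \<le> x j \<and> x j \<le> 1) \<and> (\<forall>j. 1 \<le> j \<and> j < m \<longrightarrow> x j < x (Suc j)) \<and>
        (\<forall>j\<in>{1..m}. norm (f (x j)) < \<delta>)
        \<longrightarrow> (\<Sum>j=1..m-1. norm (f (x (Suc j)) - f (x j)) powr p) powr (1 / p) < \<epsilon>)"
        using nex dpos by blast
      then show ?thesis using that by blast
    qed
    define S where "S = (\<Sum>j=1..m-1. norm (f (x (Suc j)) - f (x j)) powr p)"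
    have S0: "S \<ge> 0" by (simp add: S_def sum_nonneg)
    have "\<epsilon> \<le> S powr (1/p)" using x(4) by (simp add: S_def)
    hence "\<epsilon> powr p \<le> (S powr (1/p)) powr p" using eps p by (intro powr_mono2) auto
    also have "\<dots> = S" using S0 p by (simp add: powr_powr)
    finally have "e \<le> S" by (simp add: e_def)
    show ?thesis
      using chain_list(1,3)[OF x(2)] chain_list(2)[OF x(2), where p=p and f=f] x(1,3) \<open>e \<le> S\<close> unfolding S_def
      by (intro exI[of _ "map x [1..<Suc m]"]) auto
  qed
  define K where "K = 2 powr (p - 1)"
  have Kpos: "K > 0" by (simp add: K_def)
  define c where "c = e / (2 * K^2)"
  have cpos: "c > 0" using epos Kpos by (simp add: c_def)
  have claim: "\<forall>\<delta>>0. \<exists>L. sorted_wrt (<) L \<and> set L \<subseteq> {0..1} \<and> (\<forall>z\<in>set L. norm (f z) < \<delta>)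
                 \<and> lcs p f L \<ge> real k * c" for k :: nat
  proof (induction k)
    case 0
    show ?case by (intro allI impI exI[of _ "[]"]) auto
  next
    case (Suc k)
    show ?case
    proof (intro allI impI)
      fix \<delta> :: real assume d: "\<delta> > 0"
      obtain A where A: "sorted_wrt (<) A" "set A \<subseteq> {0..1}" "\<forall>z\<in>set A. norm (f z) < \<delta>" "lcs p f A \<ge> e"
        using base[OF d] by blast
      define n where "n = length A"
      define r where "r = (c / (6 * real n + 1)) powr (1 / p)"
      have rpos: "r > 0" using cpos by (simp add: r_def)
      define \<delta>2 where "\<delta>2 = min \<delta> (r / 2)"
      have d2: "\<delta>2 > 0" "\<delta>2 \<le> \<delta>" using d rpos by (auto simp: \<delta>2_def)
      have "(2 * \<delta>2) powr p \<le> r powr p" using d2 p by (intro powr_mono2) (auto simp: \<delta>2_def)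
      also have "\<dots> = c / (6 * real n + 1)" using cpos p by (simp add: r_def powr_powr)
      finally have Ebd: "(2 * \<delta>2) powr p \<le> c / (6 * real n + 1)" .
      have err: "6 * real n * (2 * \<delta>2) powr p \<le> c"
      proof -
        have "6 * real n * (2 * \<delta>2) powr p \<le> (6 * real n + 1) * (2 * \<delta>2) powr p"
          by (intro mult_right_mono) auto
        also have "\<dots> \<le> (6 * real n + 1) * (c / (6 * real n + 1))"
          using Ebd by (intro mult_left_mono) auto
        also have "\<dots> = c" by simp
        finally show ?thesis .
      qed
      obtain B where B: "sorted_wrt (<) B" "set B \<subseteq> {0..1}" "\<forall>z\<in>set B. norm (f z) < \<delta>2"
         "lcs p f B \<ge> real k * c"
        using Suc.IH d2 by blast
      obtain M where M: "sorted_wrt (<) M" "set M = set A \<union> set B"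
        using finite_set_strict_sorted[of "set A \<union> set B"] by auto
      have mb: "lcs p f M \<ge> lcs p f B + lcs p f A / K^2 - 6 * real n * (2 * \<delta>2) powr p"
        unfolding K_def n_def using merge_bound[OF p A(1) B(1) M(1) M(2) B(3)] .
      have "lcs p f A / K^2 \<ge> e / K^2" using A(4) Kpos by (simp add: divide_right_mono)
      hence "lcs p f A / K^2 \<ge> 2 * c" using Kpos by (simp add: c_def)
      hence "lcs p f M \<ge> real (Suc k) * c" using mb err B(4) by (simp add: algebra_simps)
      moreover have "\<forall>z\<in>set M. norm (f z) < \<delta>" using A(3) B(3) d2 M(2) by force
      moreover have "set M \<subseteq> {0..1}" using A(2) B(2) M(2) by auto
      ultimately show "\<exists>L. sorted_wrt (<) L \<and> set L \<subseteq> {0..1} \<and> (\<forall>z\<in>set L. norm (f z) < \<delta>)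
                 \<and> lcs p f L \<ge> real (Suc k) * c" using M(1) by blast
    qed
  qed
  obtain k :: nat where k: "V < real k * c" using reals_Archimedean3[OF cpos] by blast
  obtain L where L: "sorted_wrt (<) L" "set L \<subseteq> {0..1}" "lcs p f L \<ge> real k * c"
    using mp[OF spec[OF claim[of k], of 1]] by auto
  have "lcs p f L \<le> V" unfolding V_def by (rule lcs_le_var[OF p fin L(1,2)])
  then show False using k L(3) by linarith
qed


theorem lemma3p5:
  fixes p :: real
  assumes "1 \<le> p"
  shows "(\<forall>f :: real \<Rightarrow> real. f \<in> BV_p p \<longrightarrow> small_values_small_pvar p f)
       \<and> (\<forall>f :: real \<Rightarrow> complex. f \<in> BV_p p \<longrightarrow> small_values_small_pvar p f)"
  using assms by (auto intro!: main_gen)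

end
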